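(* In the homogeneous UAV Persistent Service model (all displacement times equal to $g>0$, $2g<f$, $c\ge0$), every schedule that keeps each of the $N$ locations covered at every time $t\ge 0$ uses at least $$M=N+\left\lceil\frac{c+2g}{f-2g}\,N\right\rceil$$ UAVs. Consequently (together with the feasibility of HoRR with this many UAVs) this $M$ is exactly the minimum fleet size for persistent coverage.
   Context: UAV Persistent Service model: there is a single recharging station (RS) and a finite set $\mathcal N$ of $N$ aerial locations, served by identical UAVs. A UAV with a full battery can fly for at most $f>0$ time units; replacing/recharging its battery at the RS takes $c\ge0$ time units. Flying between the RS and location $i$ takes $g_i>0$ time units (here $g_i=g$ for all $i$), with $2g_i<f$. A UAV's activity consists of sorties: it leaves the RS fully charged, flies to one location, stays there (covering it), and flies back to the RS, the total airborne time of the sortie being at most $f$; back at the RS it spends $c$ time units recharging (possibly followed by idle time) before its next sortie. At time $0$ each UAV is fully charged, either at the RS or at a location. A location is covered at time $t$ if some UAV is present there at time $t$; a schedule is feasible if all locations are covered at all times $t\ge0$. HoRR schedule: with $x=\frac{f-2g}{N}$, initially one fully charged UAV at each location, the others fully charged at the RS; for $k=1,2,\dots$ a backup leaves the RS at time $kx-g$ and at time $kx$ replaces the serving UAV with least remaining energy, which returns to the RS, recharges and becomes a backup. *)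

theory Defs
  imports Complex_Main
begin

text \<open>Locations are 0,...,N-1; the recharging station (RS) is implicit.
  A sortie is a triple (d, i, l): the UAV leaves the RS (fully charged) at time d,
  flies to location i, arrives at d + g, stays there (covering it) until time l,
  leaves at l and is back at the RS at l + g.\<close>

type_synonym sortie = "real \<times> nat \<times> real"

definition sortie_dep :: "sortie \<Rightarrow> real" where
  "sortie_dep s = fst s"

definition sortie_loc :: "sortie \<Rightarrow> nat" where
  "sortie_loc s = fst (snd s)"

definition sortie_leave :: "sortie \<Rightarrow> real" where
  "sortie_leave s = snd (snd s)"

definition valid_sortie :: "nat \<Rightarrow> real \<Rightarrow> real \<Rightarrow> sortie \<Rightarrow> bool" where
  "valid_sortie N f g s \<longleftrightarrow>
     0 \<le> sortie_dep s \<and> sortie_loc s < N \<and>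
     sortie_dep s + g \<le> sortie_leave s \<and>
     (sortie_leave s + g) - sortie_dep s \<le> f"

text \<open>The activity of one UAV.  ini = None: fully charged at the RS at time 0.
  ini = Some i: fully charged at location i at time 0; it stays there until time l0,
  then flies back (arriving at l0 + g, airborne time l0 + g \<le> f) and recharges.  After each return to the RS the UAV spends c
  time units recharging before its next sortie may start; hence distinct sorties
  (and the initial stay) are separated accordingly.\<close>
definition uav_plan :: "nat \<Rightarrow> real \<Rightarrow> real \<Rightarrow> real \<Rightarrow> nat option \<Rightarrow> real \<Rightarrow> sortie set \<Rightarrow> bool" where
  "uav_plan N f c g ini l0 S \<longleftrightarrow>
     (\<forall>s\<in>S. valid_sortie N f g s) \<and>
     (\<forall>s1\<in>S. \<forall>s2\<in>S. s1 \<noteq> s2 \<longrightarrow>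
        sortie_leave s1 + g + c \<le> sortie_dep s2 \<or> sortie_leave s2 + g + c \<le> sortie_dep s1) \<and>
     (case ini of
        None \<Rightarrow> True
      | Some i \<Rightarrow> i < N \<and> 0 \<le> l0 \<and> l0 + g \<le> f \<and> (\<forall>s\<in>S. l0 + g + c \<le> sortie_dep s))"

definition present :: "real \<Rightarrow> nat option \<Rightarrow> real \<Rightarrow> sortie set \<Rightarrow> nat \<Rightarrow> real \<Rightarrow> bool" where
  "present g ini l0 S i t \<longleftrightarrow>
     (ini = Some i \<and> 0 \<le> t \<and> t \<le> l0) \<or>
     (\<exists>s\<in>S. sortie_loc s = i \<and> sortie_dep s + g \<le> t \<and> t \<le> sortie_leave s)"

definition feasible_schedule ::
  "nat \<Rightarrow> real \<Rightarrow> real \<Rightarrow> real \<Rightarrow> nat \<Rightarrow> (nat \<Rightarrow> nat option) \<Rightarrow> (nat \<Rightarrow> real) \<Rightarrow> (nat \<Rightarrow> sortie set) \<Rightarrow> bool"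
  where
  "feasible_schedule N f c g K ini l0 S \<longleftrightarrow>
     (\<forall>u<K. uav_plan N f c g (ini u) (l0 u) (S u)) \<and>
     (\<forall>i<N. \<forall>t\<ge>0. \<exists>u<K. present g (ini u) (l0 u) (S u) i t)"

end

theory Submission
  imports Defs "HOL-Analysis.Analysis"
begin
lemma plan_sep:
  assumes "uav_plan N f c g ini l0 S" "s1 \<in> S" "s2 \<in> S" "s1 \<noteq> s2"
  shows "sortie_leave s1 + g + c \<le> sortie_dep s2 \<or> sortie_leave s2 + g + c \<le> sortie_dep s1"
  using assms unfolding uav_plan_def by blast

lemma plan_valid:
  assumes "uav_plan N f c g ini l0 S" "s \<in> S"
  shows "valid_sortie N f g s"
  using assms unfolding uav_plan_def by blast

lemma plan_finite:
  assumes P: "uav_plan N f c g ini l0 S" and g: "0 < g" and c: "0 \<le> c"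
  shows "finite {s\<in>S. sortie_dep s \<le> T}"
proof -
  define d where "d = 2*g + c"
  have d: "d > 0" using g c by (simp add: d_def)
  define h where "h s = \<lfloor>sortie_dep s / d\<rfloor>" for s
  let ?F = "{s\<in>S. sortie_dep s \<le> T}"
  have key: "h s1 < h s2" if "s1 \<in> S" "s2 \<in> S" "sortie_leave s1 + g + c \<le> sortie_dep s2" for s1 s2
  proof -
    have "sortie_dep s1 + g \<le> sortie_leave s1" using plan_valid[OF P that(1)] by (simp add: valid_sortie_def)
    hence "sortie_dep s1 + d \<le> sortie_dep s2" using that(3) by (simp add: d_def)
    hence "(sortie_dep s1 + d) / d \<le> sortie_dep s2 / d" using d by (intro divide_right_mono) auto
    hence "sortie_dep s1 / d + 1 \<le> sortie_dep s2 / d" using d by (simp add: add_divide_distrib)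
    hence "\<lfloor>sortie_dep s1 / d + 1\<rfloor> \<le> h s2" unfolding h_def by (intro floor_mono)
    thus ?thesis unfolding h_def by simp
  qed
  have "inj_on h ?F"
  proof (rule inj_onI)
    fix s1 s2 assume "s1 \<in> ?F" "s2 \<in> ?F" "h s1 = h s2"
    thus "s1 = s2" using plan_sep[OF P] key by (metis (no_types, lifting) less_irrefl mem_Collect_eq)
  qed
  moreover have "h ` ?F \<subseteq> {0..\<lfloor>T/d\<rfloor>}"
  proof
    fix y assume "y \<in> h ` ?F"
    then obtain s where s: "s \<in> S" "sortie_dep s \<le> T" "y = h s" by auto
    have "0 \<le> sortie_dep s" using plan_valid[OF P s(1)] by (simp add: valid_sortie_def)
    thus "y \<in> {0..\<lfloor>T/d\<rfloor>}" using s d unfolding h_def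
      by (auto intro!: floor_mono divide_right_mono)
  qed
  ultimately show ?thesis by (meson finite_atLeastAtMost_int finite_imageD finite_subset)
qed

lemma plan_slot_bound:
  assumes P: "uav_plan N f c g ini l0 S" and g: "0 < g" and c: "0 \<le> c" and fg: "2*g < f"
    and T: "0 \<le> T"
  shows "(\<Sum>s\<in>{s\<in>S. sortie_dep s \<le> T}. sortie_leave s - sortie_dep s - g)
          \<le> (f - 2*g) / (f + c) * (T + f + c)"
proof -
  let ?F = "{s\<in>S. sortie_dep s \<le> T}"
  let ?r = "(f - 2*g) / (f + c)"
  define J where "J s = {sortie_dep s ..< sortie_leave s + g + c}" for s
  have fin: "finite ?F" using plan_finite[OF P g c] .
  have fp: "f + c > 0" using g c fg by linarith
  have r0: "?r \<ge> 0" using fp fg by simp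
  have each: "sortie_leave s - sortie_dep s - g \<le> ?r * measure lborel (J s)" if "s \<in> ?F" for s
  proof -
    have v: "valid_sortie N f g s" using plan_valid[OF P] that by auto
    define a where "a = sortie_leave s - sortie_dep s - g"
    have a0: "0 \<le> a" "a \<le> f - 2*g" using v by (auto simp: valid_sortie_def a_def)
    have m: "measure lborel (J s) = a + 2*g + c" using a0 g c unfolding J_def a_def by simp
    have "a * (f + c) \<le> (f - 2*g) * (a + 2*g + c)"
    proof -
      have "a * (2*g + c) \<le> (f - 2*g) * (2*g+c)" using a0 g c by (intro mult_right_mono) auto
      thus ?thesis by (simp add: algebra_simps)
    qed
    hence "a \<le> ?r * (a + 2*g + c)" using fp by (simp add: field_simps)
    thus ?thesis using m a_def by simp
  qed
  have fm: "J s \<in> fmeasurable lborel" for s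
    by (rule fmeasurableI2[of "{sortie_dep s .. sortie_leave s + g + c}"])
       (auto simp: J_def intro: fmeasurable_compact)
  have disj: "pairwise (\<lambda>i j. disjnt (J i) (J j)) ?F"
    unfolding pairwise_def disjnt_def J_def
    using plan_sep[OF P] by fastforce
  have sub: "(\<Union>s\<in>?F. J s) \<subseteq> {0..T+f+c}"
  proof
    fix x assume "x \<in> (\<Union>s\<in>?F. J s)"
    then obtain s where s: "s \<in> S" "sortie_dep s \<le> T" "x \<in> J s" by auto
    have v: "valid_sortie N f g s" using plan_valid[OF P s(1)] .
    thus "x \<in> {0..T+f+c}" using s unfolding J_def valid_sortie_def by auto
  qed
  have "(\<Sum>s\<in>?F. sortie_leave s - sortie_dep s - g) \<le> (\<Sum>s\<in>?F. ?r * measure lborel (J s))"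
    by (rule sum_mono) (rule each)
  also have "\<dots> = ?r * measure lborel (\<Union>s\<in>?F. J s)"
    by (simp add: sum_distrib_left measure_UNION'[OF fin fm disj])
  also have "\<dots> \<le> ?r * measure lborel {0..T+f+c}"
    using fin by (intro mult_left_mono r0 measure_mono_fmeasurable sub)
      (auto intro!: fmeasurable_compact sets.finite_UN simp: J_def)
  also have "\<dots> = ?r * (T + f + c)" using T fp by simp
  finally show ?thesis .
qed

lemma loc_bound:
  assumes F: "feasible_schedule N f c g K ini l0 S" and g: "0 < g" and c: "0 \<le> c"
    and i: "i < N" and T: "0 \<le> T"
  shows "T \<le> (\<Sum>u<K. (if ini u = Some i then l0 u else 0) +
            (\<Sum>s\<in>{s\<in>S u. sortie_dep s \<le> T \<and> sortie_loc s = i}. sortie_leave s - sortie_dep s - g))"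
proof -
  have P: "uav_plan N f c g (ini u) (l0 u) (S u)" if "u < K" for u
    using F that unfolding feasible_schedule_def by blast
  define A0 where "A0 u = (if ini u = Some i then {0..l0 u} else {})" for u
  define Fi where "Fi u = {s\<in>S u. sortie_dep s \<le> T \<and> sortie_loc s = i}" for u
  define B where "B u = A0 u \<union> (\<Union>s\<in>Fi u. {sortie_dep s + g..sortie_leave s})" for u
  have finF: "finite (Fi u)" if "u < K" for u
    using plan_finite[OF P[OF that] g c, of T] unfolding Fi_def
    by (rule finite_subset[rotated]) auto
  have cB: "compact (B u)" if "u < K" for u
    unfolding B_def A0_def using finF[OF that]
    by (intro compact_Un compact_UN) auto
  have sub: "{0..T} \<subseteq> (\<Union>u\<in>{..<K}. B u)"
  proof
    fix t assume t: "t \<in> {0..T}"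
    then obtain u where u: "u < K" and pr: "present g (ini u) (l0 u) (S u) i t"
      using F i unfolding feasible_schedule_def by (meson atLeastAtMost_iff)
    from pr have "t \<in> B u"
    proof (unfold present_def, elim disjE bexE conjE)
      assume "ini u = Some i" "0 \<le> t" "t \<le> l0 u" thus ?thesis by (simp add: B_def A0_def)
    next
      fix s assume s: "s \<in> S u" "sortie_loc s = i" "sortie_dep s + g \<le> t" "t \<le> sortie_leave s"
      hence "s \<in> Fi u" using t g by (auto simp: Fi_def)
      thus ?thesis using s by (auto simp: B_def)
    qed
    thus "t \<in> (\<Union>u\<in>{..<K}. B u)" using u by auto
  qed
  have "T = measure lborel {0..T}" using T by simp
  also have "\<dots> \<le> measure lborel (\<Union>u\<in>{..<K}. B u)"
    using cB by (intro measure_mono_fmeasurable sub) (auto intro!: fmeasurable_compact compact_UN)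
  also have "\<dots> \<le> (\<Sum>u<K. measure lborel (B u))"
    using cB by (intro measure_UNION_le) (auto intro: borel_compact)
  also have "\<dots> \<le> (\<Sum>u<K. (if ini u = Some i then l0 u else 0) +
            (\<Sum>s\<in>Fi u. sortie_leave s - sortie_dep s - g))"
  proof (rule sum_mono)
    fix u assume "u \<in> {..<K}"
    hence u: "u < K" by simp
    have "measure lborel (B u) \<le> measure lborel (A0 u) + measure lborel (\<Union>s\<in>Fi u. {sortie_dep s + g..sortie_leave s})"
      unfolding B_def using finF[OF u] by (intro measure_Un_le) (auto simp: A0_def)
    also have "measure lborel (A0 u) = (if ini u = Some i then l0 u else 0)"
      using P[OF u] by (auto simp: A0_def uav_plan_def)
    also have "measure lborel (\<Union>s\<in>Fi u. {sortie_dep s + g..sortie_leave s})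
       \<le> (\<Sum>s\<in>Fi u. measure lborel {sortie_dep s + g..sortie_leave s})"
      using finF[OF u] by (intro measure_UNION_le) auto
    also have "\<dots> = (\<Sum>s\<in>Fi u. sortie_leave s - sortie_dep s - g)"
    proof (rule sum.cong)
      fix s assume "s \<in> Fi u"
      hence "valid_sortie N f g s" using plan_valid[OF P[OF u]] by (auto simp: Fi_def)
      thus "measure lborel {sortie_dep s + g..sortie_leave s} = sortie_leave s - sortie_dep s - g"
        by (simp add: valid_sortie_def)
    qed simp
    finally show "measure lborel (B u) \<le> (if ini u = Some i then l0 u else 0) +
            (\<Sum>s\<in>Fi u. sortie_leave s - sortie_dep s - g)" by simp
  qed
  finally show ?thesis unfolding Fi_def .
qed

lemma lower_bound:
  assumes g: "0 < g" and fg: "2*g < f" and c: "0 \<le> c"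
    and F: "feasible_schedule N f c g K ini l0 S"
  shows "N + nat \<lceil>(c + 2 * g) / (f - 2 * g) * real N\<rceil> \<le> K"
proof -
  define r where "r = (f - 2*g) / (f + c)"
  have P: "uav_plan N f c g (ini u) (l0 u) (S u)" if "u < K" for u
    using F that unfolding feasible_schedule_def by blast
  have fp: "f + c > 0" using g c fg by linarith
  have main: "real N * T \<le> real K * (f + r * (T + f + c))" if T: "0 \<le> T" for T
  proof -
    define h where "h s = sortie_leave s - sortie_dep s - g" for s
    define Fa where "Fa u = {s\<in>S u. sortie_dep s \<le> T}" for u
    have "real N * T = (\<Sum>i<N. T)" by simp
    also have "\<dots> \<le> (\<Sum>i<N. \<Sum>u<K. (if ini u = Some i then l0 u else 0) +
            (\<Sum>s\<in>{s\<in>S u. sortie_dep s \<le> T \<and> sortie_loc s = i}. h s))"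
      unfolding h_def by (intro sum_mono loc_bound[OF F g c _ T]) auto
    also have "\<dots> = (\<Sum>u<K. (\<Sum>i<N. if ini u = Some i then l0 u else 0) +
            (\<Sum>i<N. \<Sum>s\<in>{s\<in>Fa u. sortie_loc s = i}. h s))"
      by (subst sum.swap) (simp add: sum.distrib Fa_def conj_commute conj_left_commute)
    also have "\<dots> \<le> (\<Sum>u<K. f + r * (T + f + c))"
    proof (rule sum_mono)
      fix u assume "u \<in> {..<K}"
      hence u: "u < K" by simp
      have finF: "finite (Fa u)" unfolding Fa_def using plan_finite[OF P[OF u] g c] .
      have "(\<Sum>i<N. \<Sum>s\<in>{s\<in>Fa u. sortie_loc s = i}. h s) = (\<Sum>s\<in>Fa u. h s)"
        using plan_valid[OF P[OF u]] finF
        by (intro sum.group) (auto simp: Fa_def valid_sortie_def)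
      also have "\<dots> \<le> r * (T + f + c)"
        unfolding Fa_def h_def r_def using plan_slot_bound[OF P[OF u] g c fg T] by simp
      finally have A: "(\<Sum>i<N. \<Sum>s\<in>{s\<in>Fa u. sortie_loc s = i}. h s) \<le> r * (T + f + c)" .
      have B: "(\<Sum>i<N. if ini u = Some i then l0 u else 0) \<le> f"
      proof (cases "ini u")
        case None thus ?thesis using fg g by simp
      next
        case (Some j)
        have "(\<Sum>i<N. if ini u = Some i then l0 u else 0) = (\<Sum>i<N. if i = j then l0 u else 0)"
          using Some by (intro sum.cong) auto
        also have "\<dots> = (if j < N then l0 u else 0)" by simp
        also have "\<dots> \<le> f" using P[OF u] Some g fg by (auto simp: uav_plan_def)
        finally show ?thesis .
      qed
      show "(\<Sum>i<N. if ini u = Some i then l0 u else 0) +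
            (\<Sum>i<N. \<Sum>s\<in>{s\<in>Fa u. sortie_loc s = i}. h s) \<le> f + r * (T + f + c)"
        using A B by simp
    qed
    also have "\<dots> = real K * (f + r * (T + f + c))" by simp
    finally show ?thesis .
  qed
  define C where "C = f + r * (f + c)"
  have NK: "real N \<le> real K * r"
  proof (rule ccontr)
    assume "\<not> ?thesis"
    hence pos: "real N - real K * r > 0" by simp
    define T where "T = (real K * C + 1) / (real N - real K * r)"
    have C0: "C \<ge> 0" unfolding C_def r_def using fg g c fp by (simp add: add_nonneg_nonneg)
    have T0: "T \<ge> 0" unfolding T_def using pos C0 by simp
    have "(real N - real K * r) * T = real K * C + 1" unfolding T_def using pos by simp
    moreover have "real N * T \<le> real K * (f + r * (T + f + c))" using main[OF T0] .
    ultimately show False unfolding C_def by (simp add: algebra_simps)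
  qed
  have fg2: "f - 2*g > 0" using fg by simp
  have key: "real N * (f + c) \<le> real K * (f - 2*g)"
    using NK fp unfolding r_def by (simp add: field_simps)
  have KN: "N \<le> K"
  proof (rule ccontr)
    assume "\<not> N \<le> K"
    hence "real K < real N" by simp
    hence "real K * (f - 2*g) < real N * (f - 2*g)" using fg2 by simp
    also have "\<dots> \<le> real N * (f + c)" using g c by (intro mult_left_mono) auto
    finally show False using key by simp
  qed
  have "(c + 2 * g) / (f - 2 * g) * real N \<le> real K - real N"
    using key fg2 by (simp add: field_simps)
  hence "\<lceil>(c + 2 * g) / (f - 2 * g) * real N\<rceil> \<le> int K - int N"
    by (simp add: ceiling_le_iff)
  thus ?thesis using KN by linarith
qed

lemma upper_bound:
  assumes g: "0 < g" and fg: "2*g < f" and c: "0 \<le> c"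
  shows "\<exists>ini l0 S. feasible_schedule N f c g
            (N + nat \<lceil>(c + 2 * g) / (f - 2 * g) * real N\<rceil>) ini l0 S"
proof (cases "N = 0")
  case True thus ?thesis by (simp add: feasible_schedule_def)
next
  case False
  hence N: "N > 0" by simp
  define M where "M = N + nat \<lceil>(c + 2 * g) / (f - 2 * g) * real N\<rceil>"
  define x where "x = (f - 2*g) / real N"
  have x0: "x > 0" using fg N by (simp add: x_def)
  have Nx: "real N * x = f - 2*g" using N by (simp add: x_def)
  have MN: "N \<le> M" by (simp add: M_def)
  have M0: "M > 0" using N MN by simp
  have gap: "(real M - real N) * x \<ge> 2*g + c"
  proof -
    have "real M - real N = real (nat \<lceil>(c + 2 * g) / (f - 2 * g) * real N\<rceil>)" by (simp add: M_def)
    also have "\<dots> \<ge> (c + 2 * g) / (f - 2 * g) * real N" by linarith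
    finally have "(real M - real N) * x \<ge> (c + 2 * g) / (f - 2 * g) * real N * x"
      using x0 by (intro mult_right_mono) auto
    also have "(c + 2 * g) / (f - 2 * g) * real N * x = (c + 2 * g) / (f - 2 * g) * (real N * x)"
      by simp
    also have "\<dots> = c + 2*g" using Nx fg by simp
    finally show ?thesis by simp
  qed
  define a where "a m = (real m + 1 - real N) * x" for m :: nat
  define b where "b m = (real m + 1) * x" for m :: nat
  define srt where "srt m = (a m - g, m mod N, b m)" for m :: nat
  define ini where "ini u = (if a u < g then Some (u mod N) else None)" for u
  define l0 where "l0 u = b u" for u
  define S where "S u = srt ` {m. m mod M = u \<and> g \<le> a m}" for u
  have ab: "b m = a m + real N * x" for m by (simp add: a_def b_def algebra_simps)
  have amono: "a m1 < a m2 \<Longrightarrow> m1 < m2" for m1 m2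
    using x0 by (auto simp: a_def mult_less_cancel_right)
  have sep: "b m1 + g + c \<le> a m2 - g" if "m1 mod M = m2 mod M" "m1 < m2" for m1 m2
  proof -
    have "M dvd (m2 - m1)" using that by (metis less_imp_le mod_eq_dvd_iff_nat)
    hence "M \<le> m2 - m1" using that(2) by (intro dvd_imp_le) auto
    hence "real M \<le> real m2 - real m1" using that(2) by linarith
    hence "(real M - real N) * x \<le> (real m2 - real m1 - real N) * x" using x0
      by (intro mult_right_mono) auto
    thus ?thesis using gap by (simp add: a_def b_def algebra_simps)
  qed
  have bigM: "g \<le> a m" if "M \<le> m" for m
  proof -
    have "(real M - real N) * x \<le> (real m + 1 - real N) * x" using that x0
      by (intro mult_right_mono) auto
    thus ?thesis using gap g c by (simp add: a_def)
  qed
  have plan: "uav_plan N f c g (ini u) (l0 u) (S u)" if u: "u < M" for u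
    unfolding uav_plan_def
  proof (intro conjI ballI impI)
    fix s assume "s \<in> S u"
    then obtain m where m: "s = srt m" "g \<le> a m" by (auto simp: S_def)
    show "valid_sortie N f g s"
      using m N x0 Nx ab[of m] fg
      by (simp add: valid_sortie_def srt_def sortie_dep_def sortie_loc_def sortie_leave_def)
  next
    fix s1 s2 assume s: "s1 \<in> S u" "s2 \<in> S u" "s1 \<noteq> s2"
    then obtain m1 m2 where m: "s1 = srt m1" "s2 = srt m2" "m1 mod M = u" "m2 mod M = u"
      by (auto simp: S_def)
    hence "m1 \<noteq> m2" using s by auto
    hence "m1 < m2 \<or> m2 < m1" by arith
    thus "sortie_leave s1 + g + c \<le> sortie_dep s2 \<or> sortie_leave s2 + g + c \<le> sortie_dep s1"
      using sep m by (auto simp: srt_def sortie_dep_def sortie_leave_def)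
  next
    show "case ini u of None \<Rightarrow> True
      | Some i \<Rightarrow> i < N \<and> 0 \<le> l0 u \<and> l0 u + g \<le> f \<and> (\<forall>s\<in>S u. l0 u + g + c \<le> sortie_dep s)"
    proof (cases "a u < g")
      case False thus ?thesis by (simp add: ini_def)
    next
      case True
      have l1: "0 \<le> l0 u" using x0 by (simp add: l0_def b_def)
      have l2: "l0 u + g \<le> f" using True Nx ab[of u] by (simp add: l0_def)
      have l3: "l0 u + g + c \<le> sortie_dep s" if "s \<in> S u" for s
      proof -
        obtain m where m: "s = srt m" "m mod M = u" "g \<le> a m"
          using \<open>s \<in> S u\<close> unfolding S_def by blast
        have "u < m" using amono[of u m] True m(3) by simp
        moreover have "u mod M = m mod M" using m(2) u by simp
        ultimately show ?thesis using sep[of u m] m(1)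
          by (simp add: l0_def srt_def sortie_dep_def)
      qed
      show ?thesis using True N l1 l2 l3 by (simp add: ini_def)
    qed
  qed
  have cover: "\<exists>u<M. present g (ini u) (l0 u) (S u) i t" if i: "i < N" and t: "0 \<le> t" for i t
  proof -
    define q where "q = nat \<lceil>(t / x - real i - 1) / real N\<rceil>"
    define m where "m = i + N * q"
    have q1: "real q \<ge> (t / x - real i - 1) / real N" unfolding q_def by linarith
    hence "real N * real q \<ge> t / x - real i - 1" using N by (simp add: field_simps)
    hence "t / x \<le> real m + 1" by (simp add: m_def)
    hence tb: "t \<le> b m" using x0 by (simp add: b_def field_simps)
    have ta: "a m \<le> t"
    proof (cases "q = 0")
      case True
      have "a m \<le> 0" using i x0 by (simp add: a_def m_def True mult_nonpos_nonneg)
      thus ?thesis using t by simp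
    next
      case False
      hence "real q - 1 < (t / x - real i - 1) / real N" unfolding q_def by linarith
      hence "real N * (real q - 1) < t / x - real i - 1" using N by (simp add: field_simps)
      hence "real m + 1 - real N < t / x" by (simp add: m_def algebra_simps)
      thus ?thesis using x0 by (simp add: a_def field_simps)
    qed
    have mi: "m mod N = i" using i by (simp add: m_def)
    show ?thesis
    proof (cases "g \<le> a m")
      case True
      have "srt m \<in> S (m mod M)" using True by (auto simp: S_def)
      hence "present g (ini (m mod M)) (l0 (m mod M)) (S (m mod M)) i t"
        unfolding present_def using ta tb mi
        by (intro disjI2 bexI[of _ "srt m"]) (auto simp: srt_def sortie_dep_def sortie_loc_def sortie_leave_def)
      thus ?thesis using M0 by (intro exI[of _ "m mod M"]) auto
    next
      case False
      hence mM: "m < M" using bigM by (meson not_le)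
      have "present g (ini m) (l0 m) (S m) i t"
        unfolding present_def using False mi t tb by (simp add: ini_def l0_def)
      thus ?thesis using mM by blast
    qed
  qed
  have "feasible_schedule N f c g M ini l0 S"
    unfolding feasible_schedule_def using plan cover by blast
  thus ?thesis unfolding M_def by blast
qed

theorem theorem2:
  fixes N :: nat and f c g :: real
  assumes "0 < g" and "2 * g < f" and "0 \<le> c"
  shows "(\<forall>K ini l0 S. feasible_schedule N f c g K ini l0 S \<longrightarrow>
            N + nat \<lceil>(c + 2 * g) / (f - 2 * g) * real N\<rceil> \<le> K)
       \<and> (\<exists>ini l0 S. feasible_schedule N f c g
            (N + nat \<lceil>(c + 2 * g) / (f - 2 * g) * real N\<rceil>) ini l0 S)"
  using lower_bound[OF assms] upper_bound[OF assms] by blast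

end
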